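(* Let $C$ be a normal closed cone with nonempty interior in a real Banach space. Let $f:\operatorname{int} C \to \operatorname{int} C$ be order-preserving and homogeneous. Let $x, u \in \operatorname{int} C$ with $\|u\| = 1$ and let $0 < \theta < 1$. Then the following are equivalent: (a) $\limsup_{k\to\infty} d_H(f^k(x), u)^{1/k} \le \theta$; (b) there is $\lambda > 0$ such that $\limsup_{k\to\infty} d_T\big(f^k(x)/r_C(f)^k, \lambda u\big)^{1/k} \le \theta$; (c) there is $\lambda > 0$ such that $\limsup_{k\to\infty} \big\| f^k(x)/r_C(f)^k - \lambda u \big\|^{1/k} \le \theta$; (d) $\limsup_{k\to\infty} \big\| f^k(x)/\|f^k(x)\| - u \big\|^{1/k} \le \theta$.
   Context: A closed cone is a closed convex set $C \subset X$ with $\lambda C \subset C$ for $\lambda \ge 0$ and $C \cap (-C) = \{0\}$; $x\le y$ means $y-x\in C$. $C$ is normal if there is $\kappa > 0$ with $\|x\| \le \kappa\|y\|$ whenever $0 \le x \le y$. $f$ is order-preserving if $x\le y\Rightarrow f(x)\le f(y)$ and homogeneous if $f(tx)=tf(x)$ for $t>0$. For $x,y \in \operatorname{int} C$: $M(x/y) := \inf\{\beta>0 : x \le \beta y\}$, $m(x/y) := \sup\{\alpha>0 : \alpha y \le x\}$; Thompson's metric $d_T(x,y) = \max\{\log M(x/y), \log M(y/x)\}$; Hilbert's projective metric $d_H(x,y) = \log(M(x/y)/m(x/y))$. The cone spectral radius is $r_C(f) = \limsup_{k\to\infty}\|f^k(y)\|^{1/k}$ for any $y \in \operatorname{int} C$.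 *)

theory Defs
  imports "HOL-Analysis.Analysis"
begin

definition closed_cone :: "'a::real_normed_vector set \<Rightarrow> bool" where
  "closed_cone C \<longleftrightarrow> closed C \<and> convex C \<and> (\<forall>l::real. l \<ge> 0 \<longrightarrow> (\<forall>x\<in>C. l *\<^sub>R x \<in> C))
      \<and> C \<inter> uminus ` C = {0}"

definition cone_le :: "'a::real_normed_vector set \<Rightarrow> 'a \<Rightarrow> 'a \<Rightarrow> bool" where
  "cone_le C x y \<longleftrightarrow> y - x \<in> C"

definition normal_cone :: "'a::real_normed_vector set \<Rightarrow> bool" where
  "normal_cone C \<longleftrightarrow> (\<exists>\<kappa>>0. \<forall>x y. cone_le C 0 x \<and> cone_le C x y \<longrightarrow> norm x \<le> \<kappa> * norm y)"

definition order_preserving_on :: "'a::real_normed_vector set \<Rightarrow> 'a set \<Rightarrow> ('a \<Rightarrow> 'a) \<Rightarrow> bool" where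
  "order_preserving_on C D f \<longleftrightarrow> (\<forall>x\<in>D. \<forall>y\<in>D. cone_le C x y \<longrightarrow> cone_le C (f x) (f y))"

definition homogeneous_on :: "'a::real_normed_vector set \<Rightarrow> ('a \<Rightarrow> 'a) \<Rightarrow> bool" where
  "homogeneous_on D f \<longleftrightarrow> (\<forall>x\<in>D. \<forall>t::real. t > 0 \<longrightarrow> f (t *\<^sub>R x) = t *\<^sub>R f x)"

definition Mfun :: "'a::real_normed_vector set \<Rightarrow> 'a \<Rightarrow> 'a \<Rightarrow> real" where
  "Mfun C x y = Inf {\<beta>::real. \<beta> > 0 \<and> cone_le C x (\<beta> *\<^sub>R y)}"

definition mfun :: "'a::real_normed_vector set \<Rightarrow> 'a \<Rightarrow> 'a \<Rightarrow> real" where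
  "mfun C x y = Sup {\<alpha>::real. \<alpha> > 0 \<and> cone_le C (\<alpha> *\<^sub>R y) x}"

definition thompson_metric :: "'a::real_normed_vector set \<Rightarrow> 'a \<Rightarrow> 'a \<Rightarrow> real" where
  "thompson_metric C x y = max (ln (Mfun C x y)) (ln (Mfun C y x))"

definition hilbert_metric :: "'a::real_normed_vector set \<Rightarrow> 'a \<Rightarrow> 'a \<Rightarrow> real" where
  "hilbert_metric C x y = ln (Mfun C x y / mfun C x y)"

text \<open>Cone spectral radius: limsup of the k-th roots of the norms of the iterates,
  evaluated at some (any) interior point; as an extended real.\<close>
definition cone_spectral_radius :: "'a::real_normed_vector set \<Rightarrow> ('a \<Rightarrow> 'a) \<Rightarrow> ereal" where
  "cone_spectral_radius C f =
     (let y = (SOME y. y \<in> interior C) in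
      limsup (\<lambda>k::nat. ereal (norm ((f ^^ k) y) powr (1 / real k))))"

end

theory Submission
  imports Defs
begin


definition rate :: "real \<Rightarrow> (nat \<Rightarrow> real) \<Rightarrow> bool" where
  "rate \<theta> a \<longleftrightarrow> (\<forall>\<theta>'>\<theta>. eventually (\<lambda>k. a k \<le> \<theta>'^k) sequentially)"

lemma powr_root_le_iff:
  fixes a t :: real and k :: nat
  assumes "a \<ge> 0" "t > 0" "k \<ge> 1"
  shows "a powr (1/real k) \<le> t \<longleftrightarrow> a \<le> t^k"
proof (cases "a = 0")
  case True then show ?thesis using assms by simp
next
  case False
  then have a: "a > 0" using assms by simp
  have "(a powr (1/real k))^k = a"
    using a assms by (simp add: powr_realpow[symmetric] powr_powr)
  moreover have "a powr (1/real k) \<ge> 0" by simp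
  ultimately show ?thesis using assms power_mono_iff[of "a powr (1/real k)" t k] by simp
qed

lemma limsup_rate:
  fixes a :: "nat \<Rightarrow> real"
  assumes th: "\<theta> > 0" and nn: "\<And>k. a k \<ge> 0"
  shows "limsup (\<lambda>k. ereal (a k powr (1/real k))) \<le> ereal \<theta> \<longleftrightarrow> rate \<theta> a"
proof
  assume L: "limsup (\<lambda>k. ereal (a k powr (1/real k))) \<le> ereal \<theta>"
  show "rate \<theta> a" unfolding rate_def
  proof (intro allI impI)
    fix t assume t: "t > \<theta>"
    have "\<forall>y>ereal \<theta>. eventually (\<lambda>k. ereal (a k powr (1/real k)) < y) sequentially"
      using L Limsup_le_iff[of sequentially "\<lambda>k. ereal (a k powr (1/real k))" "ereal \<theta>"] by auto
    then have "eventually (\<lambda>k. ereal (a k powr (1/real k)) < ereal t) sequentially"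
      using t by (meson ereal_less(2) less_ereal.simps(1))
    then have "eventually (\<lambda>k. a k powr (1/real k) < t) sequentially" by simp
    moreover have "eventually (\<lambda>k. k \<ge> (1::nat)) sequentially" by (rule eventually_ge_at_top)
    ultimately show "eventually (\<lambda>k. a k \<le> t^k) sequentially"
    proof (rule eventually_elim2)
      fix k :: nat assume "a k powr (1/real k) < t" "k \<ge> 1"
      then show "a k \<le> t^k" using powr_root_le_iff[of "a k" t k] nn th t by simp
    qed
  qed
next
  assume R: "rate \<theta> a"
  show "limsup (\<lambda>k. ereal (a k powr (1/real k))) \<le> ereal \<theta>"
    unfolding Limsup_le_iff
  proof (intro allI impI)
    fix y assume y: "y > ereal \<theta>"
    obtain t where t: "\<theta> < t" "ereal t < y"
    proof (cases y)
      case (real r) then show ?thesis using y that[of "(\<theta>+r)/2"] by auto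
    next
      case PInf then show ?thesis using that[of "\<theta>+1"] by auto
    next
      case MInf then show ?thesis using y by auto
    qed
    have "eventually (\<lambda>k. a k \<le> t^k) sequentially" using R t unfolding rate_def by auto
    moreover have "eventually (\<lambda>k. k \<ge> (1::nat)) sequentially" by (rule eventually_ge_at_top)
    ultimately show "eventually (\<lambda>k. y > ereal (a k powr (1/real k))) sequentially"
    proof (rule eventually_elim2)
      fix k :: nat assume "a k \<le> t^k" "k \<ge> 1"
      then have "a k powr (1/real k) \<le> t" using powr_root_le_iff[of "a k" t k] nn th t by simp
      then show "y > ereal (a k powr (1/real k))" using t by (meson ereal_less_eq(3) order.strict_trans1)
    qed
  qed
qed

lemma rate_mono:
  assumes R: "rate \<theta> a" and th: "\<theta> > 0" and c: "c > 0"
    and ev: "eventually (\<lambda>k. b k \<le> c * a k) sequentially"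
  shows "rate \<theta> b"
  unfolding rate_def
proof (intro allI impI)
  fix t assume t: "t > \<theta>"
  define s where "s = (\<theta> + t)/2"
  have s: "\<theta> < s" "s < t" "s > 0" using t th by (auto simp: s_def)
  have e1: "eventually (\<lambda>k. a k \<le> s^k) sequentially" using R s unfolding rate_def by auto
  have "(\<lambda>k. (s/t)^k) \<longlonglongrightarrow> 0" using s by (intro LIMSEQ_power_zero) auto
  then have e2: "eventually (\<lambda>k. (s/t)^k < 1/c) sequentially"
    using c by (simp add: order_tendstoD(2))
  show "eventually (\<lambda>k. b k \<le> t^k) sequentially"
    using e1 e2 ev
  proof (eventually_elim)
    case (elim k)
    have "c * a k \<le> c * s^k" using elim c by (intro mult_left_mono) auto
    then have "b k \<le> c * s^k" using elim by linarith
    also have "\<dots> = c * (s/t)^k * t^k" using s by (simp add: power_divide)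
    also have "\<dots> \<le> t^k"
    proof -
      have "c * (s/t)^k \<le> 1" using elim c by (simp add: field_simps)
      then show ?thesis using mult_right_mono[of "c*(s/t)^k" 1 "t^k"] s by simp
    qed
    finally show ?case .
  qed
qed

lemma rate_small:
  assumes R: "rate \<theta> a" and "\<theta> < 1" "\<theta> > 0" "\<epsilon> > 0"
  shows "\<exists>N. \<forall>k\<ge>N. a k \<le> \<epsilon>"
proof -
  define s where "s = (1 + \<theta>)/2"
  have s: "s > \<theta>" "s < 1" "s > 0" using assms by (auto simp: s_def)
  have e1: "eventually (\<lambda>k. a k \<le> s^k) sequentially" using R s unfolding rate_def by auto
  have "(\<lambda>k. s^k) \<longlonglongrightarrow> 0" using s by (intro LIMSEQ_power_zero) auto
  then have e2: "eventually (\<lambda>k. s^k < \<epsilon>) sequentially" using assms by (simp add: order_tendstoD(2))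
  from eventually_conj[OF e1 e2] obtain N where "\<forall>k\<ge>N. a k \<le> s^k \<and> s^k < \<epsilon>"
    unfolding eventually_sequentially by auto
  then show ?thesis by force
qed



locale setting =
  fixes C :: "'a::real_normed_vector set" and f :: "'a \<Rightarrow> 'a" and u :: 'a and \<kappa> :: real
  assumes cc: "closed_cone C"
    and kpos: "\<kappa> > 0"
    and normal: "\<And>x y. cone_le C 0 x \<Longrightarrow> cone_le C x y \<Longrightarrow> norm x \<le> \<kappa> * norm y"
    and fint: "f ` interior C \<subseteq> interior C"
    and fmono0: "order_preserving_on C (interior C) f"
    and fhom0: "homogeneous_on (interior C) f"
    and uint: "u \<in> interior C" and unorm: "norm u = 1"
begin

lemma closedC: "closed C" and convexC: "convex C"
  and scaleC: "l \<ge> 0 \<Longrightarrow> x \<in> C \<Longrightarrow> l *\<^sub>R x \<in> C"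
  and pointed: "C \<inter> uminus ` C = {0}"
  using cc unfolding closed_cone_def by auto

lemma zeroC: "0 \<in> C" using pointed by auto

lemma addC: assumes "x \<in> C" "y \<in> C" shows "x + y \<in> C"
proof -
  have "(1/2) *\<^sub>R x + (1/2) *\<^sub>R y \<in> C" using convexC assms unfolding convex_def by auto
  then have "2 *\<^sub>R ((1/2) *\<^sub>R x + (1/2) *\<^sub>R y) \<in> C" by (intro scaleC) auto
  then show ?thesis by (simp add: scaleR_add_right)
qed

lemma antisym0: assumes "x \<in> C" "-x \<in> C" shows "x = 0"
proof -
  have "x \<in> uminus ` C" using image_eqI[of x uminus "-x"] assms by simp
  then show ?thesis using pointed assms by auto
qed

lemma le_refl: "cone_le C x x" by (simp add: cone_le_def zeroC)

lemma le_trans: "cone_le C x y \<Longrightarrow> cone_le C y z \<Longrightarrow> cone_le C x z"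
  unfolding cone_le_def using addC[of "y - x" "z - y"] by simp

lemma le_antisym: "cone_le C x y \<Longrightarrow> cone_le C y x \<Longrightarrow> x = y"
  unfolding cone_le_def using antisym0[of "y - x"] by simp

lemma le_scale: "t \<ge> 0 \<Longrightarrow> cone_le C x y \<Longrightarrow> cone_le C (t *\<^sub>R x) (t *\<^sub>R y)"
  unfolding cone_le_def using scaleC[of t "y-x"] by (simp add: scaleR_diff_right)

lemma le_0_iff: "cone_le C 0 x \<longleftrightarrow> x \<in> C" by (simp add: cone_le_def)

lemma intC: "y \<in> interior C \<Longrightarrow> y \<in> C" using interior_subset by blast

lemma le_scale_mono: "z \<in> C \<Longrightarrow> s \<le> t \<Longrightarrow> cone_le C (s *\<^sub>R z) (t *\<^sub>R z)"
  unfolding cone_le_def using scaleC[of "t - s" z] by (simp add: scaleR_diff_left)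

lemma scale_le_imp:
  assumes w: "w \<in> C" "w \<noteq> 0" and le: "cone_le C (a *\<^sub>R w) (b *\<^sub>R w)" shows "a \<le> b"
proof (rule ccontr)
  assume "\<not> a \<le> b"
  then have ab: "a - b > 0" by simp
  have bw: "(b - a) *\<^sub>R w \<in> C" using le by (metis cone_le_def scaleR_diff_left)
  have "(1/(a-b)) *\<^sub>R ((b - a) *\<^sub>R w) \<in> C" by (rule scaleC[OF _ bw]) (use ab in simp)
  moreover have h: "(1/(a-b)) * (b-a) = -1" using ab by (simp add: field_simps)
  then have "(1/(a-b)) *\<^sub>R ((b - a) *\<^sub>R w) = - w" unfolding scaleR_scaleR h by simp
  ultimately have "-w \<in> C" by simp
  then show False using antisym0 w by auto
qed

lemma int_ball: assumes "y \<in> interior C" shows "\<exists>\<rho>>0. \<forall>w. norm w \<le> \<rho> \<longrightarrow> y + w \<in> C"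
proof -
  obtain e where e: "e > 0" "ball y e \<subseteq> C" using assms mem_interior by blast
  show ?thesis
  proof (intro exI[of _ "e/2"] conjI allI impI)
    fix w :: 'a assume "norm w \<le> e/2"
    then have "y + w \<in> ball y e" using e by (simp add: dist_norm)
    then show "y + w \<in> C" using e by blast
  qed (use e in auto)
qed

lemma int_dom: assumes "y \<in> interior C"
  shows "\<exists>\<rho>>0. \<forall>w. cone_le C w ((norm w / \<rho>) *\<^sub>R y) \<and> cone_le C (-w) ((norm w / \<rho>) *\<^sub>R y)"
proof -
  obtain \<rho> where r: "\<rho> > 0" "\<And>w. norm w \<le> \<rho> \<Longrightarrow> y + w \<in> C" using int_ball[OF assms] by blast
  have key: "(norm w / \<rho>) *\<^sub>R y - w \<in> C" for w
  proof (cases "w = 0")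
    case True then show ?thesis using zeroC by simp
  next
    case False
    define t where "t = norm w / \<rho>"
    have t: "t > 0" using False r by (simp add: t_def)
    have "norm (- ((1/t) *\<^sub>R w)) \<le> \<rho>" using t r False by (simp add: t_def)
    then have "y + - ((1/t) *\<^sub>R w) \<in> C" using r by blast
    then have "t *\<^sub>R (y + - ((1/t) *\<^sub>R w)) \<in> C" using t by (intro scaleC) auto
    moreover have "t *\<^sub>R (y + - ((1/t) *\<^sub>R w)) = t *\<^sub>R y - w" using t
      by (simp add: scaleR_diff_right)
    ultimately show ?thesis by (simp add: t_def)
  qed
  show ?thesis
  proof (intro exI[of _ \<rho>] conjI allI)
    fix w
    show "cone_le C w ((norm w / \<rho>) *\<^sub>R y)" using key[of w] by (simp add: cone_le_def)
    show "cone_le C (-w) ((norm w / \<rho>) *\<^sub>R y)" using key[of "-w"] by (simp add: cone_le_def)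
  qed (use r in auto)
qed

lemma zero_not_int: "0 \<notin> interior C"
proof
  assume "0 \<in> interior C"
  then obtain \<rho> where r: "\<rho> > 0" "\<And>w. norm w \<le> \<rho> \<Longrightarrow> 0 + w \<in> C" using int_ball by blast
  have "\<rho> *\<^sub>R u \<in> C" "- (\<rho> *\<^sub>R u) \<in> C" using r unorm by auto
  then have "\<rho> *\<^sub>R u = 0" using antisym0 by blast
  then show False using r unorm by auto
qed

lemma int_nz: "y \<in> interior C \<Longrightarrow> y \<noteq> 0" using zero_not_int by auto

lemma scale_int: assumes "t > 0" "y \<in> interior C" shows "t *\<^sub>R y \<in> interior C"
proof -
  obtain e where e: "e > 0" "ball y e \<subseteq> C" using assms mem_interior by blast
  have "ball (t *\<^sub>R y) (t * e) \<subseteq> C"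
  proof
    fix w assume "w \<in> ball (t *\<^sub>R y) (t * e)"
    then have "norm (t *\<^sub>R y - w) < t * e" by (simp add: dist_norm)
    moreover have "t *\<^sub>R y - w = t *\<^sub>R (y - (1/t) *\<^sub>R w)" using assms
      by (simp add: scaleR_diff_right)
    ultimately have "t * norm (y - (1/t) *\<^sub>R w) < t * e" using assms by simp
    then have "norm (y - (1/t) *\<^sub>R w) < e" using assms by simp
    then have "(1/t) *\<^sub>R w \<in> C" using e by (auto simp: dist_norm)
    then show "w \<in> C" using scaleC[of t "(1/t) *\<^sub>R w"] assms by simp
  qed
  then show ?thesis using assms e mem_interior by (metis mult_pos_pos)
qed

lemma Mset_ne: assumes "y \<in> interior C" "z \<in> interior C"
  shows "\<exists>\<beta>>0. cone_le C y (\<beta> *\<^sub>R z)"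
proof -
  obtain \<rho> where r: "\<rho> > 0" "\<And>w. cone_le C w ((norm w / \<rho>) *\<^sub>R z)" using int_dom[OF assms(2)] by blast
  have "cone_le C y ((norm y / \<rho>) *\<^sub>R z)" using r by blast
  moreover have "cone_le C ((norm y / \<rho>) *\<^sub>R z) ((norm y / \<rho> + 1) *\<^sub>R z)"
    using le_scale_mono intC[OF assms(2)] by simp
  ultimately have "cone_le C y ((norm y / \<rho> + 1) *\<^sub>R z)" by (rule le_trans)
  moreover have "norm y / \<rho> + 1 > 0" using r by (simp add: add_nonneg_pos)
  ultimately show ?thesis by blast
qed

lemma M_props: assumes y: "y \<in> interior C" and z: "z \<in> interior C"
  shows "Mfun C y z > 0" "cone_le C y (Mfun C y z *\<^sub>R z)"
    "\<And>\<beta>. \<beta> > 0 \<Longrightarrow> cone_le C y (\<beta> *\<^sub>R z) \<Longrightarrow> Mfun C y z \<le> \<beta>"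
proof -
  define S where "S = {\<beta>::real. \<beta> > 0 \<and> cone_le C y (\<beta> *\<^sub>R z)}"
  have M: "Mfun C y z = Inf S" by (simp add: Mfun_def S_def)
  have ne: "S \<noteq> {}" using Mset_ne[OF y z] by (auto simp: S_def)
  have bdd: "bdd_below S" unfolding S_def by (rule bdd_belowI[of _ 0]) auto
  show least: "\<And>\<beta>. \<beta> > 0 \<Longrightarrow> cone_le C y (\<beta> *\<^sub>R z) \<Longrightarrow> Mfun C y z \<le> \<beta>"
    unfolding M using bdd by (intro cInf_lower) (auto simp: S_def)
  have T: "closed {\<beta>::real. \<beta> *\<^sub>R z - y \<in> C}"
  proof -
    have "closed ((\<lambda>\<beta>::real. \<beta> *\<^sub>R z - y) -` C)"
      by (rule continuous_closed_vimage[OF closedC]) (intro continuous_intros)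
    then show ?thesis by (simp add: vimage_def)
  qed
  have "closure S \<subseteq> {\<beta>::real. \<beta> *\<^sub>R z - y \<in> C}"
    by (rule closure_minimal[OF _ T]) (auto simp: S_def cone_le_def)
  moreover have "Inf S \<in> closure S" using closure_contains_Inf[OF ne bdd] .
  ultimately have att: "Mfun C y z *\<^sub>R z - y \<in> C" unfolding M by blast
  then show "cone_le C y (Mfun C y z *\<^sub>R z)" by (simp add: cone_le_def)
  have ge: "Mfun C y z \<ge> 0" unfolding M using ne by (intro cInf_greatest) (auto simp: S_def)
  show "Mfun C y z > 0"
  proof (rule ccontr)
    assume "\<not> Mfun C y z > 0"
    then have "Mfun C y z = 0" using ge by simp
    then have "- y \<in> C" using att by simp
    then have "y = 0" using antisym0 intC[OF y] by blast
    then show False using int_nz[OF y] by simp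
  qed
qed

lemma m_props: assumes y: "y \<in> interior C" and z: "z \<in> interior C"
  shows "mfun C y z > 0" "cone_le C (mfun C y z *\<^sub>R z) y"
    "\<And>\<alpha>. \<alpha> > 0 \<Longrightarrow> cone_le C (\<alpha> *\<^sub>R z) y \<Longrightarrow> \<alpha> \<le> mfun C y z"
proof -
  define S where "S = {\<alpha>::real. \<alpha> > 0 \<and> cone_le C (\<alpha> *\<^sub>R z) y}"
  have m: "mfun C y z = Sup S" by (simp add: mfun_def S_def)
  obtain \<beta> where b: "\<beta> > 0" "cone_le C z (\<beta> *\<^sub>R y)" using Mset_ne[OF z y] by blast
  have "cone_le C ((1/\<beta>) *\<^sub>R z) ((1/\<beta>) *\<^sub>R (\<beta> *\<^sub>R y))" using b by (intro le_scale) auto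
  then have a0: "(1/\<beta>) \<in> S" using b by (simp add: S_def)
  then have ne: "S \<noteq> {}" by blast
  obtain \<gamma> where g: "\<gamma> > 0" "cone_le C y (\<gamma> *\<^sub>R z)" using Mset_ne[OF y z] by blast
  have bdd: "bdd_above S" unfolding S_def
  proof (rule bdd_aboveI[of _ \<gamma>])
    fix \<alpha> assume "\<alpha> \<in> {\<alpha>. 0 < \<alpha> \<and> cone_le C (\<alpha> *\<^sub>R z) y}"
    then have "cone_le C (\<alpha> *\<^sub>R z) (\<gamma> *\<^sub>R z)" using g le_trans by blast
    then show "\<alpha> \<le> \<gamma>" using scale_le_imp intC[OF z] int_nz[OF z] by blast
  qed
  show "\<And>\<alpha>. \<alpha> > 0 \<Longrightarrow> cone_le C (\<alpha> *\<^sub>R z) y \<Longrightarrow> \<alpha> \<le> mfun C y z"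
    unfolding m using bdd by (intro cSup_upper) (auto simp: S_def)
  have T: "closed {\<alpha>::real. y - \<alpha> *\<^sub>R z \<in> C}"
  proof -
    have "closed ((\<lambda>\<alpha>::real. y - \<alpha> *\<^sub>R z) -` C)"
      by (rule continuous_closed_vimage[OF closedC]) (intro continuous_intros)
    then show ?thesis by (simp add: vimage_def)
  qed
  have "closure S \<subseteq> {\<alpha>::real. y - \<alpha> *\<^sub>R z \<in> C}"
    by (rule closure_minimal[OF _ T]) (auto simp: S_def cone_le_def)
  moreover have "Sup S \<in> closure S" using closure_contains_Sup[OF ne bdd] .
  ultimately show "cone_le C (mfun C y z *\<^sub>R z) y" unfolding m by (auto simp: cone_le_def)
  have "1/\<beta> \<le> Sup S" using a0 bdd by (intro cSup_upper)
  then show "mfun C y z > 0" unfolding m using b by (smt (verit) divide_pos_pos)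
qed

lemma hilbert_nonneg: assumes y: "y \<in> interior C" and z: "z \<in> interior C"
  shows "hilbert_metric C y z \<ge> 0"
proof -
  have "cone_le C (mfun C y z *\<^sub>R z) (Mfun C y z *\<^sub>R z)"
    using M_props[OF y z] m_props[OF y z] le_trans by blast
  then have "mfun C y z \<le> Mfun C y z" using scale_le_imp intC[OF z] int_nz[OF z] by blast
  then show ?thesis using m_props(1)[OF y z] by (simp add: hilbert_metric_def)
qed

lemma hilbert_le: assumes y: "y \<in> interior C" and z: "z \<in> interior C"
  and ab: "\<alpha> > 0" "\<beta> > 0" "cone_le C (\<alpha> *\<^sub>R z) y" "cone_le C y (\<beta> *\<^sub>R z)"
  shows "hilbert_metric C y z \<le> ln (\<beta> / \<alpha>)"
proof -
  have 1: "Mfun C y z \<le> \<beta>" using M_props(3)[OF y z] ab by blast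
  have 2: "\<alpha> \<le> mfun C y z" using m_props(3)[OF y z] ab by blast
  have "Mfun C y z / mfun C y z \<le> \<beta> / \<alpha>"
    using 1 2 ab M_props(1)[OF y z] by (intro frac_le) auto
  moreover have "Mfun C y z / mfun C y z > 0" using M_props(1)[OF y z] m_props(1)[OF y z] by simp
  ultimately show ?thesis unfolding hilbert_metric_def by simp
qed

lemma thompson_nonneg: assumes y: "y \<in> interior C" and z: "z \<in> interior C"
  shows "thompson_metric C y z \<ge> 0"
proof -
  have "cone_le C (Mfun C y z *\<^sub>R z) (Mfun C y z *\<^sub>R (Mfun C z y *\<^sub>R y))"
    using M_props[OF z y] M_props(1)[OF y z] by (intro le_scale) auto
  then have "cone_le C (1 *\<^sub>R y) ((Mfun C y z * Mfun C z y) *\<^sub>R y)"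
    using M_props(2)[OF y z] le_trans by simp
  then have "1 \<le> Mfun C y z * Mfun C z y" using scale_le_imp intC[OF y] int_nz[OF y] by blast
  then have "0 \<le> ln (Mfun C y z * Mfun C z y)" by simp
  then have "0 \<le> ln (Mfun C y z) + ln (Mfun C z y)" using M_props(1)[OF y z] M_props(1)[OF z y]
    by (simp add: ln_mult)
  then show ?thesis unfolding thompson_metric_def by linarith
qed

lemma thompson_le: assumes y: "y \<in> interior C" and z: "z \<in> interior C"
  and b: "\<beta> > 0" "cone_le C y (\<beta> *\<^sub>R z)" "cone_le C z (\<beta> *\<^sub>R y)"
  shows "thompson_metric C y z \<le> ln \<beta>"
proof -
  have "Mfun C y z \<le> \<beta>" "Mfun C z y \<le> \<beta>" using M_props(3)[OF y z] M_props(3)[OF z y] b by auto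
  then show ?thesis using M_props(1)[OF y z] M_props(1)[OF z y] unfolding thompson_metric_def by simp
qed

lemma thompson_bound: assumes y: "y \<in> interior C" and z: "z \<in> interior C"
  and d: "thompson_metric C y z \<le> \<delta>"
  shows "cone_le C y (exp \<delta> *\<^sub>R z)" "cone_le C z (exp \<delta> *\<^sub>R y)"
proof -
  have "ln (Mfun C y z) \<le> \<delta>" "ln (Mfun C z y) \<le> \<delta>" using d unfolding thompson_metric_def by auto
  then have "Mfun C y z \<le> exp \<delta>" "Mfun C z y \<le> exp \<delta>"
    using M_props(1)[OF y z] M_props(1)[OF z y] by (metis exp_le_cancel_iff exp_ln)+
  then show "cone_le C y (exp \<delta> *\<^sub>R z)" "cone_le C z (exp \<delta> *\<^sub>R y)"
    using M_props(2)[OF y z] M_props(2)[OF z y] le_scale_mono intC[OF y] intC[OF z] le_trans by blast+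
qed

lemma fmono: "p \<in> interior C \<Longrightarrow> q \<in> interior C \<Longrightarrow> cone_le C p q \<Longrightarrow> cone_le C (f p) (f q)"
  using fmono0 unfolding order_preserving_on_def by blast

lemma fhom: "p \<in> interior C \<Longrightarrow> t > 0 \<Longrightarrow> f (t *\<^sub>R p) = t *\<^sub>R f p"
  using fhom0 unfolding homogeneous_on_def by blast

lemma fint': "p \<in> interior C \<Longrightarrow> f p \<in> interior C" using fint by blast

lemma iter_int: "p \<in> interior C \<Longrightarrow> (f^^k) p \<in> interior C"
  by (induction k) (auto intro: fint')

lemma iter_hom: "p \<in> interior C \<Longrightarrow> t > 0 \<Longrightarrow> (f^^k) (t *\<^sub>R p) = t *\<^sub>R (f^^k) p"
  by (induction k) (auto simp: fhom iter_int)

lemma iter_mono: "p \<in> interior C \<Longrightarrow> q \<in> interior C \<Longrightarrow> cone_le C p q \<Longrightarrow> cone_le C ((f^^k) p) ((f^^k) q)"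
  by (induction k) (auto intro: fmono iter_int)

lemma eigen_iter: "f u = \<mu> *\<^sub>R u \<Longrightarrow> \<mu> > 0 \<Longrightarrow> (f^^k) u = (\<mu>^k) *\<^sub>R u"
proof (induction k)
  case (Suc k)
  then show ?case using fhom[OF uint, of "\<mu>^k"] by simp
qed simp

lemma norm_sandwich: assumes "cone_le C w a" "cone_le C (-w) a"
  shows "norm w \<le> (2*\<kappa>+1) * norm a"
proof -
  have 1: "cone_le C 0 (w + a)" using assms(2) by (simp add: cone_le_def add.commute)
  have e: "2 *\<^sub>R a - (w + a) = a - w" by (simp add: scaleR_2 algebra_simps)
  have 2: "cone_le C (w + a) (2 *\<^sub>R a)" unfolding cone_le_def e using assms(1) unfolding cone_le_def .
  have "norm (w + a) \<le> \<kappa> * norm (2 *\<^sub>R a)" using normal[OF 1 2] .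
  then have "norm (w + a) \<le> 2 * \<kappa> * norm a" by simp
  moreover have "norm w \<le> norm (w + a) + norm a" using norm_triangle_ineq4[of "w + a" a] by simp
  ultimately show ?thesis by (simp add: algebra_simps)
qed

lemma norm_le_of_le: "cone_le C 0 x \<Longrightarrow> cone_le C x y \<Longrightarrow> norm x \<le> \<kappa> * norm y"
  by (rule normal)

end

lemma limsup_root_bounds:
  fixes s :: "nat \<Rightarrow> real"
  assumes pos: "A > 0" "B > 0" "c > 0" "D > 0" and lo: "\<And>k. A * c^k \<le> s k" and hi: "\<And>k. s k \<le> B * D^k"
  shows "ereal c \<le> limsup (\<lambda>k. ereal (s k powr (1/real k)))"
    "limsup (\<lambda>k. ereal (s k powr (1/real k))) \<le> ereal D"
proof -
  have lim: "(\<lambda>k. ereal (X powr (1/real k) * Y)) \<longlonglongrightarrow> ereal Y" if "X > 0" for X Y :: real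
  proof -
    have "(\<lambda>k. X powr (1/real k)) \<longlonglongrightarrow> X powr 0" using that
      by (intro tendsto_powr tendsto_const lim_1_over_n) auto
    then have "(\<lambda>k. X powr (1/real k)) \<longlonglongrightarrow> 1" using that by simp
    from tendsto_mult[OF this tendsto_const[of Y]] show ?thesis by simp
  qed
  have pw: "(X * Z^k) powr (1/real k) = X powr (1/real k) * Z" if "X > 0" "Z > 0" "k \<ge> 1" for X Z :: real and k :: nat
  proof -
    have "(X * Z^k) powr (1/real k) = X powr (1/real k) * (Z powr real k) powr (1/real k)"
      using that by (simp add: powr_mult powr_realpow)
    also have "\<dots> = X powr (1/real k) * Z" using that by (simp add: powr_powr)
    finally show ?thesis .
  qed
  have e1: "eventually (\<lambda>k. k \<ge> (1::nat)) sequentially" by (rule eventually_ge_at_top)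
  have "eventually (\<lambda>k. ereal (A powr (1/real k) * c) \<le> ereal (s k powr (1/real k))) sequentially"
    using e1
  proof (rule eventually_mono)
    fix k :: nat assume k: "k \<ge> 1"
    have "(A * c^k) powr (1/real k) \<le> s k powr (1/real k)" using lo[of k] pos by (intro powr_mono2) auto
    then show "ereal (A powr (1/real k) * c) \<le> ereal (s k powr (1/real k))" using pw[of A c k] pos k by simp
  qed
  from Limsup_mono[OF this] show "ereal c \<le> limsup (\<lambda>k. ereal (s k powr (1/real k)))"
    using lim_imp_Limsup[OF trivial_limit_sequentially lim[OF pos(1), of c]] by simp
  have "eventually (\<lambda>k. ereal (s k powr (1/real k)) \<le> ereal (B powr (1/real k) * D)) sequentially"
    using e1
  proof (rule eventually_mono)
    fix k :: nat assume k: "k \<ge> 1"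
    have "0 \<le> s k" using lo[of k] pos by (smt (verit) mult_pos_pos zero_less_power)
    then have "s k powr (1/real k) \<le> (B * D^k) powr (1/real k)" using hi[of k] pos by (intro powr_mono2) auto
    then show "ereal (s k powr (1/real k)) \<le> ereal (B powr (1/real k) * D)" using pw[of B D k] pos k by simp
  qed
  from Limsup_mono[OF this] show "limsup (\<lambda>k. ereal (s k powr (1/real k))) \<le> ereal D"
    using lim_imp_Limsup[OF trivial_limit_sequentially lim[OF pos(2), of D]] by simp
qed

context setting begin

abbreviation "y0 \<equiv> (SOME y. y \<in> interior C)"

lemma y0_int: "y0 \<in> interior C" using uint by (metis someI_ex)

lemma rr_bounds:
  assumes pos: "A > 0" "B > 0" "c > 0" "D > 0"
    and lo: "\<And>k. A * c^k \<le> norm ((f^^k) y0)" and hi: "\<And>k. norm ((f^^k) y0) \<le> B * D^k"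
  shows "c \<le> real_of_ereal (cone_spectral_radius C f)" "real_of_ereal (cone_spectral_radius C f) \<le> D"
proof -
  have L: "cone_spectral_radius C f = limsup (\<lambda>k. ereal (norm ((f^^k) y0) powr (1/real k)))"
    unfolding cone_spectral_radius_def Let_def ..
  note b = limsup_root_bounds[OF pos lo hi]
  show "c \<le> real_of_ereal (cone_spectral_radius C f)" "real_of_ereal (cone_spectral_radius C f) \<le> D"
    unfolding L using b pos
    by (cases "limsup (\<lambda>k. ereal (norm ((f^^k) y0) powr (1/real k)))"; simp)+
qed

lemma rr_pos: "real_of_ereal (cone_spectral_radius C f) > 0"
proof -
  have y: "y0 \<in> interior C" by (rule y0_int)
  have fy: "f y0 \<in> interior C" using fint' y by blast
  define c where "c = mfun C (f y0) y0"
  define D where "D = Mfun C (f y0) y0"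
  have c: "c > 0" "cone_le C (c *\<^sub>R y0) (f y0)" using m_props[OF fy y] by (auto simp: c_def)
  have D: "D > 0" "cone_le C (f y0) (D *\<^sub>R y0)" using M_props[OF fy y] by (auto simp: D_def)
  have ind: "cone_le C ((c^k) *\<^sub>R y0) ((f^^k) y0) \<and> cone_le C ((f^^k) y0) ((D^k) *\<^sub>R y0)" for k
  proof (induction k)
    case 0 then show ?case by (simp add: le_refl)
  next
    case (Suc k)
    have i1: "(c^k) *\<^sub>R y0 \<in> interior C" "(D^k) *\<^sub>R y0 \<in> interior C"
      using scale_int y c D by auto
    have a1: "cone_le C (f ((c^k) *\<^sub>R y0)) (f ((f^^k) y0))"
      using fmono[OF i1(1) iter_int[OF y]] Suc by blast
    have a2: "f ((c^k) *\<^sub>R y0) = (c^k) *\<^sub>R f y0" using fhom y c by simp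
    have a3: "cone_le C ((c^k) *\<^sub>R (c *\<^sub>R y0)) ((c^k) *\<^sub>R f y0)" using le_scale[of "c^k" "c *\<^sub>R y0" "f y0"] c by simp
    have b1: "cone_le C (f ((f^^k) y0)) (f ((D^k) *\<^sub>R y0))"
      using fmono[OF iter_int[OF y] i1(2)] Suc by blast
    have b2: "f ((D^k) *\<^sub>R y0) = (D^k) *\<^sub>R f y0" using fhom y D by simp
    have b3: "cone_le C ((D^k) *\<^sub>R f y0) ((D^k) *\<^sub>R (D *\<^sub>R y0))" using le_scale[of "D^k" "f y0" "D *\<^sub>R y0"] D by simp
    have a3': "cone_le C ((c^Suc k) *\<^sub>R y0) (f ((c^k) *\<^sub>R y0))" using a3 a2 by (simp add: mult.commute)
    have b3': "cone_le C (f ((D^k) *\<^sub>R y0)) ((D^Suc k) *\<^sub>R y0)" using b3 b2 by (simp add: mult.commute)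
    show ?case using le_trans[OF a3' a1] le_trans[OF b1 b3'] by simp
  qed
  have lo: "(norm y0 / \<kappa>) * c^k \<le> norm ((f^^k) y0)" for k
  proof -
    have "norm ((c^k) *\<^sub>R y0) \<le> \<kappa> * norm ((f^^k) y0)"
      using normal[of "(c^k) *\<^sub>R y0" "(f^^k) y0"] ind[of k] scale_int[of "c^k" y0] y c intC le_0_iff by auto
    then show ?thesis using kpos c by (simp add: field_simps)
  qed
  have hi: "norm ((f^^k) y0) \<le> (\<kappa> * norm y0) * D^k" for k
  proof -
    have "norm ((f^^k) y0) \<le> \<kappa> * norm ((D^k) *\<^sub>R y0)"
      using normal[of "(f^^k) y0" "(D^k) *\<^sub>R y0"] ind[of k] iter_int[OF y] intC le_0_iff by auto
    then show ?thesis using D by (simp add: field_simps)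
  qed
  have "norm y0 > 0" using int_nz[OF y] by simp
  then have "c \<le> real_of_ereal (cone_spectral_radius C f)"
    using rr_bounds(1)[OF _ _ c(1) D(1) lo hi] kpos by simp
  then show ?thesis using c by simp
qed

lemma rr_eigen: assumes e: "f u = \<mu> *\<^sub>R u" "\<mu> > 0"
  shows "real_of_ereal (cone_spectral_radius C f) = \<mu>"
proof -
  have y: "y0 \<in> interior C" by (rule y0_int)
  define a where "a = mfun C y0 u"
  define b where "b = Mfun C y0 u"
  have a: "a > 0" "cone_le C (a *\<^sub>R u) y0" using m_props[OF y uint] by (auto simp: a_def)
  have b: "b > 0" "cone_le C y0 (b *\<^sub>R u)" using M_props[OF y uint] by (auto simp: b_def)
  have lo: "(a / \<kappa>) * \<mu>^k \<le> norm ((f^^k) y0)" for k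
  proof -
    have "cone_le C ((f^^k) (a *\<^sub>R u)) ((f^^k) y0)" using iter_mono scale_int a uint y by blast
    then have "cone_le C ((a * \<mu>^k) *\<^sub>R u) ((f^^k) y0)" using iter_hom[OF uint a(1)] eigen_iter[OF e] by simp
    moreover have "(a * \<mu>^k) *\<^sub>R u \<in> C" using scale_int uint a e intC by simp
    ultimately have "norm ((a * \<mu>^k) *\<^sub>R u) \<le> \<kappa> * norm ((f^^k) y0)"
      using normal le_0_iff by blast
    then show ?thesis using kpos a e unorm by (simp add: field_simps)
  qed
  have hi: "norm ((f^^k) y0) \<le> (\<kappa> * b) * \<mu>^k" for k
  proof -
    have "cone_le C ((f^^k) y0) ((f^^k) (b *\<^sub>R u))" using iter_mono scale_int b uint y by blast
    then have "cone_le C ((f^^k) y0) ((b * \<mu>^k) *\<^sub>R u)" using iter_hom[OF uint b(1)] eigen_iter[OF e] by simp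
    moreover have "(f^^k) y0 \<in> C" using iter_int[OF y] intC by blast
    ultimately have "norm ((f^^k) y0) \<le> \<kappa> * norm ((b * \<mu>^k) *\<^sub>R u)"
      using normal le_0_iff by blast
    then show ?thesis using kpos b e unorm by (simp add: field_simps)
  qed
  show ?thesis using rr_bounds[OF _ _ e(2) e(2) lo hi] a b kpos by (simp add: antisym)
qed

end


lemma normalize_bound:
  fixes y u :: "'a::real_normed_vector"
  assumes u: "norm u = 1" and l: "l > 0" and e: "norm (y - l *\<^sub>R u) \<le> l/2"
  shows "norm ((1/norm y) *\<^sub>R y - u) \<le> (4/l) * norm (y - l *\<^sub>R u)"
proof -
  define n where "n = norm y"
  define d where "d = norm (y - l *\<^sub>R u)"
  have "\<bar>norm y - norm (l *\<^sub>R u)\<bar> \<le> norm (y - l *\<^sub>R u)" by (rule norm_triangle_ineq3)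
  then have nl: "\<bar>n - l\<bar> \<le> d" using u l by (simp add: n_def d_def)
  have n: "n \<ge> l/2" using nl e d_def by linarith
  have eq: "y - n *\<^sub>R u = (y - l *\<^sub>R u) + (l - n) *\<^sub>R u" by (simp add: algebra_simps)
  have "norm (y - n *\<^sub>R u) \<le> norm (y - l *\<^sub>R u) + norm ((l - n) *\<^sub>R u)"
    unfolding eq by (rule norm_triangle_ineq)
  then have "norm (y - n *\<^sub>R u) \<le> d + \<bar>l - n\<bar>" using u by (simp add: d_def)
  also have "\<dots> \<le> 2 * d" using nl by linarith
  finally have a: "norm (y - n *\<^sub>R u) \<le> 2 * d" .
  have "(1/n) *\<^sub>R y - u = (1/n) *\<^sub>R (y - n *\<^sub>R u)" using n l by (simp add: algebra_simps)
  then have "norm ((1/n) *\<^sub>R y - u) = norm (y - n *\<^sub>R u) / n" using n l by simp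
  also have "\<dots> \<le> (2 * d) / n" using a n l by (simp add: divide_right_mono)
  also have "\<dots> \<le> (2 * d) / (l/2)" using n l by (intro divide_left_mono) (auto simp: d_def)
  also have "\<dots> = (4/l) * d" by simp
  finally show ?thesis by (simp add: n_def d_def)
qed

context setting begin

abbreviation "rr \<equiv> real_of_ereal (cone_spectral_radius C f)"

lemma dirDA: assumes x: "x \<in> interior C" and th: "0 < \<theta>" "\<theta> < 1"
  and D: "rate \<theta> (\<lambda>k. norm ((1/norm ((f^^k) x)) *\<^sub>R (f^^k) x - u))"
  shows "rate \<theta> (\<lambda>k. hilbert_metric C ((f^^k) x) u)"
proof -
  obtain \<rho> where r: "\<rho> > 0" "\<And>w. cone_le C w ((norm w / \<rho>) *\<^sub>R u) \<and> cone_le C (-w) ((norm w / \<rho>) *\<^sub>R u)"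
    using int_dom[OF uint] by blast
  obtain N where N: "\<forall>k\<ge>N. norm ((1/norm ((f^^k) x)) *\<^sub>R (f^^k) x - u) \<le> \<rho>/2"
    using rate_small[OF D th(2) th(1) half_gt_zero[OF r(1)]] by auto
  have main: "hilbert_metric C ((f^^k) x) u \<le> (4/\<rho>) * norm ((1/norm ((f^^k) x)) *\<^sub>R (f^^k) x - u)"
    if k: "k \<ge> N" for k
  proof -
    define X where "X = (f^^k) x"
    have Xi: "X \<in> interior C" using iter_int x X_def by simp
    define n where "n = norm X"
    have n: "n > 0" using int_nz[OF Xi] n_def by simp
    define w where "w = (1/n) *\<^sub>R X - u"
    define t where "t = norm w / \<rho>"
    have wle: "norm w \<le> \<rho>/2" using N k by (simp add: w_def n_def X_def)
    have t: "0 \<le> t" "t \<le> 1/2" using wle r by (auto simp: t_def divide_simps)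
    have X_eq: "X = n *\<^sub>R (u + w)" using n by (simp add: w_def)
    have w1: "t *\<^sub>R u - w \<in> C" "t *\<^sub>R u + w \<in> C" using r(2)[of w] by (auto simp: cone_le_def t_def)
    have "(n*(1+t)) *\<^sub>R u - X = n *\<^sub>R (t *\<^sub>R u - w)" by (simp add: X_eq algebra_simps)
    then have up: "cone_le C X ((n*(1+t)) *\<^sub>R u)" using scaleC[OF _ w1(1), of n] n by (simp add: cone_le_def)
    have "X - (n*(1-t)) *\<^sub>R u = n *\<^sub>R (t *\<^sub>R u + w)" by (simp add: X_eq algebra_simps)
    then have lo: "cone_le C ((n*(1-t)) *\<^sub>R u) X" using scaleC[OF _ w1(2), of n] n by (simp add: cone_le_def)
    have h: "hilbert_metric C X u \<le> ln ((n*(1+t)) / (n*(1-t)))"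
      by (rule hilbert_le[OF Xi uint _ _ lo up]) (use n t in auto)
    also have "\<dots> = ln ((1+t)/(1-t))" using n by simp
    also have "\<dots> \<le> (1+t)/(1-t) - 1" using t by (intro ln_le_minus_one) auto
    also have "\<dots> = 2*t/(1-t)" using t by (simp add: field_simps)
    also have "\<dots> \<le> 4 * t"
    proof -
      have h1: "t*(t*2) \<le> t*1" using t by (intro mult_left_mono) auto
      then show ?thesis using t by (simp add: field_simps)
    qed
    also have "\<dots> = (4/\<rho>) * norm w" by (simp add: t_def)
    finally show ?thesis by (simp add: X_def w_def n_def)
  qed
  have ev: "eventually (\<lambda>k. hilbert_metric C ((f^^k) x) u \<le> (4/\<rho>) * norm ((1/norm ((f^^k) x)) *\<^sub>R (f^^k) x - u)) sequentially"
    unfolding eventually_sequentially using main by blast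
  have "4/\<rho> > 0" using r by simp
  from rate_mono[OF D th(1) this ev] show ?thesis .
qed

lemma dirCD: assumes x: "x \<in> interior C" and th: "0 < \<theta>" "\<theta> < 1" and l: "l > 0"
  and Cc: "rate \<theta> (\<lambda>k. norm ((1/rr^k) *\<^sub>R (f^^k) x - l *\<^sub>R u))"
  shows "rate \<theta> (\<lambda>k. norm ((1/norm ((f^^k) x)) *\<^sub>R (f^^k) x - u))"
proof -
  have r: "rr > 0" by (rule rr_pos)
  obtain N where N: "\<forall>k\<ge>N. norm ((1/rr^k) *\<^sub>R (f^^k) x - l *\<^sub>R u) \<le> l/2"
    using rate_small[OF Cc th(2) th(1) half_gt_zero[OF l]] by auto
  have main: "norm ((1/norm ((f^^k) x)) *\<^sub>R (f^^k) x - u) \<le> (4/l) * norm ((1/rr^k) *\<^sub>R (f^^k) x - l *\<^sub>R u)"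
    if k: "k \<ge> N" for k
  proof -
    define X where "X = (f^^k) x"
    define s where "s = rr^k"
    have s: "s > 0" using r by (simp add: s_def)
    define Y where "Y = (1/s) *\<^sub>R X"
    have pre: "norm (Y - l *\<^sub>R u) \<le> l/2" using N k by (simp add: Y_def X_def s_def)
    have nb: "norm ((1/norm Y) *\<^sub>R Y - u) \<le> (4/l) * norm (Y - l *\<^sub>R u)"
      using normalize_bound[OF unorm l pre] .
    have eq: "(1/norm X) *\<^sub>R X = (1/norm Y) *\<^sub>R Y" using s by (simp add: Y_def)
    have nb2: "norm ((1/norm X) *\<^sub>R X - u) \<le> (4/l) * norm (Y - l *\<^sub>R u)" using nb unfolding eq .
    show ?thesis using nb2 unfolding Y_def X_def s_def .
  qed
  have ev: "eventually (\<lambda>k. norm ((1/norm ((f^^k) x)) *\<^sub>R (f^^k) x - u) \<le> (4/l) * norm ((1/rr^k) *\<^sub>R (f^^k) x - l *\<^sub>R u)) sequentially"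
    unfolding eventually_sequentially using main by blast
  have "4/l > 0" using l by simp
  from rate_mono[OF Cc th(1) this ev] show ?thesis .
qed

lemma dirBC: assumes x: "x \<in> interior C" and th: "0 < \<theta>" "\<theta> < 1" and l: "l > 0"
  and B: "rate \<theta> (\<lambda>k. thompson_metric C ((1/rr^k) *\<^sub>R (f^^k) x) (l *\<^sub>R u))"
  shows "rate \<theta> (\<lambda>k. norm ((1/rr^k) *\<^sub>R (f^^k) x - l *\<^sub>R u))"
proof -
  have r: "rr > 0" by (rule rr_pos)
  obtain N where N: "\<forall>k\<ge>N. thompson_metric C ((1/rr^k) *\<^sub>R (f^^k) x) (l *\<^sub>R u) \<le> 1/2"
    using rate_small[OF B th(2) th(1) half_gt_zero[OF zero_less_one]] by auto
  have lu: "l *\<^sub>R u \<in> interior C" using scale_int l uint by blast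
  have main: "norm ((1/rr^k) *\<^sub>R (f^^k) x - l *\<^sub>R u) \<le> ((2*\<kappa>+1)*2*l) * thompson_metric C ((1/rr^k) *\<^sub>R (f^^k) x) (l *\<^sub>R u)"
    if k: "k \<ge> N" for k
  proof -
    define y where "y = (1/rr^k) *\<^sub>R (f^^k) x"
    have yi: "y \<in> interior C" unfolding y_def using scale_int iter_int x r by simp
    define \<delta> where "\<delta> = thompson_metric C y (l *\<^sub>R u)"
    have d: "0 \<le> \<delta>" "\<delta> \<le> 1/2" using N k thompson_nonneg[OF yi lu] by (auto simp: \<delta>_def y_def)
    have b1: "cone_le C y (exp \<delta> *\<^sub>R (l *\<^sub>R u))" "cone_le C (l *\<^sub>R u) (exp \<delta> *\<^sub>R y)"
      using thompson_bound[OF yi lu, of \<delta>] by (auto simp: \<delta>_def)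
    have "cone_le C (exp (-\<delta>) *\<^sub>R (l *\<^sub>R u)) (exp (-\<delta>) *\<^sub>R (exp \<delta> *\<^sub>R y))"
      using le_scale[OF _ b1(2), of "exp (-\<delta>)"] by simp
    then have b2: "cone_le C (exp (-\<delta>) *\<^sub>R (l *\<^sub>R u)) y" by (simp add: exp_minus)
    define a where "a = (exp \<delta> - 1) *\<^sub>R (l *\<^sub>R u)"
    have e1: "exp \<delta> \<le> 1 + 2*\<delta>" using exp_bound_lemma[of \<delta>] d by simp
    have e2: "1 - exp (-\<delta>) \<le> exp \<delta> - 1"
    proof -
      have e: "exp \<delta> \<ge> 1" using d by simp
      have "(exp \<delta> - 1)/exp \<delta> \<le> (exp \<delta> - 1)/1" using e by (intro divide_left_mono) auto
      moreover have "1 - exp (-\<delta>) = (exp \<delta> - 1)/exp \<delta>" by (simp add: exp_minus field_simps)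
      ultimately show ?thesis by simp
    qed
    have eqa: "a - (y - l *\<^sub>R u) = exp \<delta> *\<^sub>R (l *\<^sub>R u) - y"
      by (simp add: a_def algebra_simps)
    have c1: "cone_le C (y - l *\<^sub>R u) a" unfolding cone_le_def eqa using b1(1) unfolding cone_le_def .
    have "y - exp (-\<delta>) *\<^sub>R (l *\<^sub>R u) \<in> C" using b2 by (simp add: cone_le_def)
    moreover have "((exp \<delta> - 1) - (1 - exp (-\<delta>))) *\<^sub>R (l *\<^sub>R u) \<in> C"
      by (rule scaleC) (use e2 intC[OF lu] in auto)
    ultimately have s1: "(y - exp (-\<delta>) *\<^sub>R (l *\<^sub>R u)) + ((exp \<delta> - 1) - (1 - exp (-\<delta>))) *\<^sub>R (l *\<^sub>R u) \<in> C"
      by (rule addC)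
    have s2: "(y - exp (-\<delta>) *\<^sub>R (l *\<^sub>R u)) + ((exp \<delta> - 1) - (1 - exp (-\<delta>))) *\<^sub>R (l *\<^sub>R u)
        = a - (- (y - l *\<^sub>R u))" by (simp add: a_def algebra_simps) (metis mult.commute scaleR_2 scaleR_scaleR)
    have "a - (- (y - l *\<^sub>R u)) \<in> C" using s1 unfolding s2 .
    then have c2: "cone_le C (- (y - l *\<^sub>R u)) a" unfolding cone_le_def .
    have "norm (y - l *\<^sub>R u) \<le> (2*\<kappa>+1) * norm a" by (rule norm_sandwich[OF c1 c2])
    also have "norm a = (exp \<delta> - 1) * l" using d l unorm by (simp add: a_def)
    also have "(2*\<kappa>+1) * ((exp \<delta> - 1) * l) \<le> (2*\<kappa>+1) * ((2*\<delta>) * l)"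
      using e1 kpos l by (intro mult_left_mono mult_right_mono) auto
    finally show ?thesis by (simp add: y_def \<delta>_def algebra_simps)
  qed
  have ev: "eventually (\<lambda>k. norm ((1/rr^k) *\<^sub>R (f^^k) x - l *\<^sub>R u) \<le> ((2*\<kappa>+1)*2*l) * thompson_metric C ((1/rr^k) *\<^sub>R (f^^k) x) (l *\<^sub>R u)) sequentially"
    unfolding eventually_sequentially using main by blast
  have "(2*\<kappa>+1)*2*l > 0" using l kpos by simp
  from rate_mono[OF B th(1) this ev] show ?thesis .
qed

end


context setting begin

lemma dirAB: assumes x: "x \<in> interior C" and th: "0 < \<theta>" "\<theta> < 1"
  and A: "rate \<theta> (\<lambda>k. hilbert_metric C ((f^^k) x) u)"
  shows "\<exists>l>0. rate \<theta> (\<lambda>k. thompson_metric C ((1/rr^k) *\<^sub>R (f^^k) x) (l *\<^sub>R u))"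
proof -
  define X where "X k = (f^^k) x" for k
  have Xi: "X k \<in> interior C" for k using iter_int[OF x] by (simp add: X_def)
  have XS: "X (Suc k) = f (X k)" for k by (simp add: X_def)
  define Mk where "Mk k = Mfun C (X k) u" for k
  define mk where "mk k = mfun C (X k) u" for k
  have Mk1: "Mk k > 0" for k using M_props(1)[OF Xi uint] by (simp add: Mk_def)
  have Mk2: "cone_le C (X k) (Mk k *\<^sub>R u)" for k using M_props(2)[OF Xi uint] by (simp add: Mk_def)
  have Mk3: "Mk k \<le> \<beta>" if "\<beta> > 0" "cone_le C (X k) (\<beta> *\<^sub>R u)" for k \<beta>
    using M_props(3)[OF Xi uint] that by (simp add: Mk_def)
  have mk1: "mk k > 0" for k using m_props(1)[OF Xi uint] by (simp add: mk_def)
  have mk2: "cone_le C (mk k *\<^sub>R u) (X k)" for k using m_props(2)[OF Xi uint] by (simp add: mk_def)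
  have mk3: "\<alpha> \<le> mk k" if "\<alpha> > 0" "cone_le C (\<alpha> *\<^sub>R u) (X k)" for k \<alpha>
    using m_props(3)[OF Xi uint] that by (simp add: mk_def)
  have hd: "hilbert_metric C ((f^^k) x) u = ln (Mk k / mk k)" for k
    by (simp add: hilbert_metric_def Mk_def mk_def X_def)
  have fu: "f u \<in> interior C" using fint' uint by blast
  have uC: "u \<in> C" using intC uint by blast
  have unz: "u \<noteq> 0" using int_nz uint by blast
  have s1: "cone_le C ((mk k) *\<^sub>R f u) (X (Suc k))" for k
    using fmono[OF scale_int[OF mk1 uint] Xi mk2] fhom[OF uint mk1] XS by simp
  have s2: "cone_le C (X (Suc k)) ((Mk k) *\<^sub>R f u)" for k
    using fmono[OF Xi scale_int[OF Mk1 uint] Mk2] fhom[OF uint Mk1] XS by simp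
  define Mf where "Mf = Mfun C (f u) u"
  define mf where "mf = mfun C (f u) u"
  have Mf: "Mf > 0" "cone_le C (f u) (Mf *\<^sub>R u)" using M_props[OF fu uint] by (auto simp: Mf_def)
  have mf: "mf > 0" "cone_le C (mf *\<^sub>R u) (f u)" using m_props[OF fu uint] by (auto simp: mf_def)
  have b1: "Mf \<le> Mk (Suc k) / mk k" for k
  proof -
    have "cone_le C ((mk k) *\<^sub>R f u) (Mk (Suc k) *\<^sub>R u)" using le_trans[OF s1 Mk2] .
    then have "cone_le C ((1/mk k) *\<^sub>R ((mk k) *\<^sub>R f u)) ((1/mk k) *\<^sub>R (Mk (Suc k) *\<^sub>R u))"
      using mk1[of k] by (intro le_scale) auto
    then have "cone_le C (f u) ((Mk (Suc k) / mk k) *\<^sub>R u)" using mk1[of k] by simp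
    then show ?thesis unfolding Mf_def using M_props(3)[OF fu uint] Mk1 mk1 by simp
  qed
  have b2: "mk (Suc k) / Mk k \<le> mf" for k
  proof -
    have "cone_le C (mk (Suc k) *\<^sub>R u) ((Mk k) *\<^sub>R f u)" using le_trans[OF mk2 s2] .
    then have "cone_le C ((1/Mk k) *\<^sub>R (mk (Suc k) *\<^sub>R u)) ((1/Mk k) *\<^sub>R ((Mk k) *\<^sub>R f u))"
      using Mk1[of k] by (intro le_scale) auto
    then have "cone_le C ((mk (Suc k) / Mk k) *\<^sub>R u) (f u)" using Mk1[of k] by simp
    then show ?thesis unfolding mf_def using m_props(3)[OF fu uint] Mk1 mk1 by simp
  qed
  have b3: "ln (Mf / mf) \<le> hilbert_metric C ((f^^(Suc k)) x) u + hilbert_metric C ((f^^k) x) u" for k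
  proof -
    have "Mf / mf \<le> (Mk (Suc k) / mk k) / (mk (Suc k) / Mk k)"
      using b1[of k] b2[of k] Mf mf Mk1 mk1 by (intro frac_le) auto
    also have "\<dots> = (Mk (Suc k) / mk (Suc k)) * (Mk k / mk k)"
      using Mk1 mk1 by (simp add: field_simps)
    finally have le1: "Mf / mf \<le> (Mk (Suc k) / mk (Suc k)) * (Mk k / mk k)" .
    have "ln (Mf / mf) \<le> ln ((Mk (Suc k) / mk (Suc k)) * (Mk k / mk k))"
      using le1 Mf mf Mk1 mk1 by (subst ln_le_cancel_iff) auto
    also have "\<dots> = ln (Mk (Suc k) / mk (Suc k)) + ln (Mk k / mk k)"
      using Mk1 mk1 by (intro ln_mult_pos) auto
    finally show ?thesis unfolding hd .
  qed
  have lnle: "ln (Mf / mf) \<le> 0"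
  proof (rule field_le_epsilon)
    fix e :: real assume e: "e > 0"
    obtain N where N: "\<forall>k\<ge>N. hilbert_metric C ((f^^k) x) u \<le> e/2"
      using rate_small[OF A th(2) th(1) half_gt_zero[OF e]] by auto
    have "ln (Mf / mf) \<le> hilbert_metric C ((f^^(Suc N)) x) u + hilbert_metric C ((f^^N) x) u" by (rule b3)
    also have "\<dots> \<le> e/2 + e/2"
    proof (rule add_mono)
      show "hilbert_metric C ((f^^(Suc N)) x) u \<le> e/2" using N[rule_format, of "Suc N"] by simp
      show "hilbert_metric C ((f^^N) x) u \<le> e/2" using N by simp
    qed
    finally show "ln (Mf / mf) \<le> 0 + e" by simp
  qed
  then have "Mf / mf \<le> 1" using Mf mf by simp
  then have "Mf \<le> mf" using mf by (simp add: divide_le_eq)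
  moreover have "mf \<le> Mf" using le_trans[OF mf(2) Mf(2)] scale_le_imp uC unz by blast
  ultimately have mfMf: "mf = Mf" by simp
  define \<mu> where "\<mu> = Mf"
  have mu: "\<mu> > 0" using Mf by (simp add: \<mu>_def)
  have eig: "f u = \<mu> *\<^sub>R u" using le_antisym[OF Mf(2)] mf(2) mfMf by (simp add: \<mu>_def)
  have r: "rr = \<mu>" by (rule rr_eigen[OF eig mu])
  have Mdec: "Mk (Suc k) \<le> \<mu> * Mk k" for k
  proof -
    have "cone_le C (X (Suc k)) ((\<mu> * Mk k) *\<^sub>R u)" using s2[of k] eig by (simp add: mult.commute)
    then show ?thesis using Mk3 mu Mk1 by simp
  qed
  have minc: "\<mu> * mk k \<le> mk (Suc k)" for k
  proof -
    have "cone_le C ((\<mu> * mk k) *\<^sub>R u) (X (Suc k))" using s1[of k] eig by (simp add: mult.commute)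
    then show ?thesis using mk3 mu mk1 by simp
  qed
  define P where "P k = Mk k / \<mu>^k" for k
  define p where "p k = mk k / \<mu>^k" for k
  have Pdec: "decseq P"
  proof (rule decseq_SucI)
    fix k
    have "Mk (Suc k) / \<mu>^(Suc k) \<le> (\<mu> * Mk k) / \<mu>^(Suc k)" using Mdec[of k] mu
      by (intro divide_right_mono) auto
    then show "P (Suc k) \<le> P k" using mu by (simp add: P_def)
  qed
  have pinc: "incseq p"
  proof (rule incseq_SucI)
    fix k
    have "(\<mu> * mk k) / \<mu>^(Suc k) \<le> mk (Suc k) / \<mu>^(Suc k)" using minc[of k] mu
      by (intro divide_right_mono) auto
    then show "p k \<le> p (Suc k)" using mu by (simp add: p_def)
  qed
  have mkMk: "mk k \<le> Mk k" for k using le_trans[OF mk2 Mk2] scale_le_imp uC unz by blast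
  have pP: "p k \<le> P k" for k using mkMk[of k] mu by (simp add: p_def P_def divide_right_mono)
  have pPall: "p j \<le> P k" for j k
  proof -
    have "p j \<le> p (max j k)" using pinc by (simp add: incseq_def)
    also have "\<dots> \<le> P (max j k)" by (rule pP)
    also have "\<dots> \<le> P k" using Pdec by (simp add: decseq_def)
    finally show ?thesis .
  qed
  define lam where "lam = Inf (range P)"
  have bdd: "bdd_below (range P)" by (rule bdd_belowI[of _ "p 0"]) (use pPall in auto)
  have lamP: "lam \<le> P k" for k unfolding lam_def using bdd by (intro cInf_lower) auto
  have plam: "p k \<le> lam" for k unfolding lam_def using pPall by (intro cInf_greatest) auto
  have p0: "p k > 0" for k using mk1 mu by (simp add: p_def)
  have lam0: "lam > 0" using plam[of 0] p0[of 0] by simp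
  have lu: "lam *\<^sub>R u \<in> interior C" using scale_int lam0 uint by blast
  have main: "thompson_metric C ((1/rr^k) *\<^sub>R (f^^k) x) (lam *\<^sub>R u) \<le> 1 * hilbert_metric C ((f^^k) x) u" for k
  proof -
    define y where "y = (1/\<mu>^k) *\<^sub>R X k"
    have yi: "y \<in> interior C" unfolding y_def using scale_int Xi mu by simp
    have yC: "y \<in> C" using intC yi by blast
    have y1: "cone_le C y (P k *\<^sub>R u)"
      using le_scale[OF _ Mk2[of k], of "1/\<mu>^k"] mu by (simp add: y_def P_def)
    have y2: "cone_le C (p k *\<^sub>R u) y"
      using le_scale[OF _ mk2[of k], of "1/\<mu>^k"] mu by (simp add: y_def p_def)
    define \<beta> where "\<beta> = P k / p k"
    have beta: "\<beta> > 0" using p0[of k] pP[of k] by (simp add: \<beta>_def)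
    have "P k \<le> \<beta> * lam" using plam[of k] p0[of k] pP[of k] lam0
      by (simp add: \<beta>_def field_simps mult_left_mono)
    then have "cone_le C (P k *\<^sub>R u) ((\<beta> * lam) *\<^sub>R u)" using le_scale_mono uC by blast
    then have c1: "cone_le C y (\<beta> *\<^sub>R (lam *\<^sub>R u))" using le_trans[OF y1] by simp
    have "cone_le C ((lam / p k) *\<^sub>R (p k *\<^sub>R u)) ((lam / p k) *\<^sub>R y)"
      using le_scale[OF _ y2, of "lam / p k"] lam0 p0[of k] by simp
    then have c2a: "cone_le C (lam *\<^sub>R u) ((lam / p k) *\<^sub>R y)" using p0[of k] by simp
    have "lam / p k \<le> \<beta>" using lamP[of k] p0[of k] by (simp add: \<beta>_def divide_right_mono)
    then have "cone_le C ((lam / p k) *\<^sub>R y) (\<beta> *\<^sub>R y)" using le_scale_mono yC by blast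
    then have c2: "cone_le C (lam *\<^sub>R u) (\<beta> *\<^sub>R y)" using le_trans[OF c2a] by simp
    have "thompson_metric C y (lam *\<^sub>R u) \<le> ln \<beta>" by (rule thompson_le[OF yi lu beta c1 c2])
    also have "\<beta> = Mk k / mk k" using mu by (simp add: \<beta>_def P_def p_def)
    finally show ?thesis using r by (simp add: y_def X_def hd)
  qed
  have ev: "eventually (\<lambda>k. thompson_metric C ((1/rr^k) *\<^sub>R (f^^k) x) (lam *\<^sub>R u) \<le> 1 * hilbert_metric C ((f^^k) x) u) sequentially"
    using main by simp
  have "rate \<theta> (\<lambda>k. thompson_metric C ((1/rr^k) *\<^sub>R (f^^k) x) (lam *\<^sub>R u))"
    using rate_mono[OF A th(1) zero_less_one ev] .
  then show ?thesis using lam0 by blast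
qed

end

theorem mainTheorem6:
  fixes C :: "'a::banach set" and f :: "'a \<Rightarrow> 'a" and x u :: 'a and \<theta> :: real
  assumes "closed_cone C" and "normal_cone C" and "interior C \<noteq> {}"
    and "f ` interior C \<subseteq> interior C"
    and "order_preserving_on C (interior C) f"
    and "homogeneous_on (interior C) f"
    and "x \<in> interior C" and "u \<in> interior C" and "norm u = 1"
    and "0 < \<theta>" and "\<theta> < 1"
  defines "r \<equiv> real_of_ereal (cone_spectral_radius C f)"
  shows "(limsup (\<lambda>k. ereal (hilbert_metric C ((f ^^ k) x) u powr (1 / real k))) \<le> ereal \<theta>
          \<longleftrightarrow> (\<exists>l>0. limsup (\<lambda>k. ereal (thompson_metric C ((1 / r ^ k) *\<^sub>R (f ^^ k) x) (l *\<^sub>R u)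
                     powr (1 / real k))) \<le> ereal \<theta>))
       \<and> ((\<exists>l>0. limsup (\<lambda>k. ereal (thompson_metric C ((1 / r ^ k) *\<^sub>R (f ^^ k) x) (l *\<^sub>R u)
                     powr (1 / real k))) \<le> ereal \<theta>)
          \<longleftrightarrow> (\<exists>l>0. limsup (\<lambda>k. ereal (norm ((1 / r ^ k) *\<^sub>R (f ^^ k) x - l *\<^sub>R u)
                     powr (1 / real k))) \<le> ereal \<theta>))
       \<and> ((\<exists>l>0. limsup (\<lambda>k. ereal (norm ((1 / r ^ k) *\<^sub>R (f ^^ k) x - l *\<^sub>R u)
                     powr (1 / real k))) \<le> ereal \<theta>)
          \<longleftrightarrow> limsup (\<lambda>k. ereal (norm ((1 / norm ((f ^^ k) x)) *\<^sub>R (f ^^ k) x - u)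
                     powr (1 / real k))) \<le> ereal \<theta>)"
proof -
  obtain \<kappa> where k: "\<kappa> > 0" "\<forall>x y. cone_le C 0 x \<and> cone_le C x y \<longrightarrow> norm x \<le> \<kappa> * norm y"
    using assms(2) unfolding normal_cone_def by blast
  interpret S: setting C f u \<kappa>
    using assms(1,4,5,6,8,9) k by unfold_locales auto
  have x: "x \<in> interior C" and th: "0 < \<theta>" "\<theta> < 1" using assms by auto
  have rpos: "S.rr > 0" by (rule S.rr_pos)
  have eA: "limsup (\<lambda>k. ereal (hilbert_metric C ((f ^^ k) x) u powr (1 / real k))) \<le> ereal \<theta>
      \<longleftrightarrow> rate \<theta> (\<lambda>k. hilbert_metric C ((f ^^ k) x) u)"
    by (rule limsup_rate[OF th(1)]) (use S.hilbert_nonneg S.iter_int[OF x] S.uint in auto)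
  have eB: "limsup (\<lambda>k. ereal (thompson_metric C ((1 / S.rr ^ k) *\<^sub>R (f ^^ k) x) (l *\<^sub>R u)
                     powr (1 / real k))) \<le> ereal \<theta>
      \<longleftrightarrow> rate \<theta> (\<lambda>k. thompson_metric C ((1 / S.rr ^ k) *\<^sub>R (f ^^ k) x) (l *\<^sub>R u))" if l: "l > 0" for l
  proof (rule limsup_rate[OF th(1)])
    fix k
    have "(1 / S.rr ^ k) *\<^sub>R (f ^^ k) x \<in> interior C" using S.scale_int S.iter_int[OF x] rpos by simp
    moreover have "l *\<^sub>R u \<in> interior C" using S.scale_int S.uint l by simp
    ultimately show "0 \<le> thompson_metric C ((1 / S.rr ^ k) *\<^sub>R (f ^^ k) x) (l *\<^sub>R u)"
      by (rule S.thompson_nonneg)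
  qed
  have eC: "limsup (\<lambda>k. ereal (norm ((1 / S.rr ^ k) *\<^sub>R (f ^^ k) x - l *\<^sub>R u)
                     powr (1 / real k))) \<le> ereal \<theta>
      \<longleftrightarrow> rate \<theta> (\<lambda>k. norm ((1 / S.rr ^ k) *\<^sub>R (f ^^ k) x - l *\<^sub>R u))" for l
    by (rule limsup_rate[OF th(1)]) simp
  have eD: "limsup (\<lambda>k. ereal (norm ((1 / norm ((f ^^ k) x)) *\<^sub>R (f ^^ k) x - u)
                     powr (1 / real k))) \<le> ereal \<theta>
      \<longleftrightarrow> rate \<theta> (\<lambda>k. norm ((1 / norm ((f ^^ k) x)) *\<^sub>R (f ^^ k) x - u))"
    by (rule limsup_rate[OF th(1)]) simp
  have AB: "rate \<theta> (\<lambda>k. hilbert_metric C ((f ^^ k) x) u) \<Longrightarrow>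
      \<exists>l>0. rate \<theta> (\<lambda>k. thompson_metric C ((1 / S.rr ^ k) *\<^sub>R (f ^^ k) x) (l *\<^sub>R u))"
    using S.dirAB[OF x th] by simp
  have BC: "\<exists>l>0. rate \<theta> (\<lambda>k. thompson_metric C ((1 / S.rr ^ k) *\<^sub>R (f ^^ k) x) (l *\<^sub>R u)) \<Longrightarrow>
      \<exists>l>0. rate \<theta> (\<lambda>k. norm ((1 / S.rr ^ k) *\<^sub>R (f ^^ k) x - l *\<^sub>R u))"
    using S.dirBC[OF x th] by blast
  have CD: "\<exists>l>0. rate \<theta> (\<lambda>k. norm ((1 / S.rr ^ k) *\<^sub>R (f ^^ k) x - l *\<^sub>R u)) \<Longrightarrow>
      rate \<theta> (\<lambda>k. norm ((1 / norm ((f ^^ k) x)) *\<^sub>R (f ^^ k) x - u))"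
    using S.dirCD[OF x th] by blast
  have DA: "rate \<theta> (\<lambda>k. norm ((1 / norm ((f ^^ k) x)) *\<^sub>R (f ^^ k) x - u)) \<Longrightarrow>
      rate \<theta> (\<lambda>k. hilbert_metric C ((f ^^ k) x) u)"
    using S.dirDA[OF x th] by blast
  have eB': "(\<exists>l>0. limsup (\<lambda>k. ereal (thompson_metric C ((1 / S.rr ^ k) *\<^sub>R (f ^^ k) x) (l *\<^sub>R u)
                     powr (1 / real k))) \<le> ereal \<theta>)
      \<longleftrightarrow> (\<exists>l>0. rate \<theta> (\<lambda>k. thompson_metric C ((1 / S.rr ^ k) *\<^sub>R (f ^^ k) x) (l *\<^sub>R u)))"
    using eB by blast
  have eC': "(\<exists>l>0. limsup (\<lambda>k. ereal (norm ((1 / S.rr ^ k) *\<^sub>R (f ^^ k) x - l *\<^sub>R u)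
                     powr (1 / real k))) \<le> ereal \<theta>)
      \<longleftrightarrow> (\<exists>l>0. rate \<theta> (\<lambda>k. norm ((1 / S.rr ^ k) *\<^sub>R (f ^^ k) x - l *\<^sub>R u)))"
    using eC by blast
  show ?thesis unfolding r_def eA eB' eC' eD using AB BC CD DA by blast
qed

end
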